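(* Let $\ell\ge 3$ and $d\ge 1$ be integers. For every integer $t$ with $1\le t\le \ell-2$, the number of vertices of the $t$-iterated line digraph $L^t(CK(d,\ell))$ is $$(d^2-d+1)^t d^{\ell-t}+\frac{1}{2}(-1)^{\ell+1}(d-2)^t(d-1)d+\frac{1}{2}(-1)^{\ell} d^{t+1}(d+1).$$
   Context: Let $\Sigma=\{0,1,\dots,d\}$. The cyclic Kautz digraph $CK(d,\ell)$ has as vertices all sequences $a_1\ldots a_\ell\in\Sigma^\ell$ with $a_i\neq a_{i+1}$ for $1\le i\le \ell-1$ and $a_1\neq a_\ell$, with an arc from $a_1\ldots a_\ell$ to $b_1\ldots b_\ell$ iff both are vertices and $b_i=a_{i+1}$ for $1\le i\le\ell-1$. The line digraph $L(G)$ of a digraph $G$ has as vertices the arcs of $G$, with an arc from $(u,v)$ to $(v',w)$ iff $v'=v$. $L^0(G)=G$ and $L^t(G)=L(L^{t-1}(G))$. *)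

theory Defs
  imports Main "HOL.Real"
begin

text \<open>Vertices of iterated line digraphs: a base vertex, or an arc (u,v) of
  the previous digraph, viewed as a vertex.\<close>
datatype 'a vtx = Base 'a | Arc "'a vtx" "'a vtx"

type_synonym 'a digraph = "'a set \<times> ('a \<times> 'a) set"

definition verts :: "'a digraph \<Rightarrow> 'a set" where
  "verts G = fst G"

definition arcs :: "'a digraph \<Rightarrow> ('a \<times> 'a) set" where
  "arcs G = snd G"

definition line_digraph :: "'a vtx digraph \<Rightarrow> 'a vtx digraph" where
  "line_digraph G =
     ({Arc u v | u v. (u, v) \<in> arcs G},
      {(Arc u v, Arc v' w) | u v v' w. (u, v) \<in> arcs G \<and> (v', w) \<in> arcs G \<and> v' = v})"

definition iter_line_digraph :: "nat \<Rightarrow> 'a vtx digraph \<Rightarrow> 'a vtx digraph" where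
  "iter_line_digraph t G = (line_digraph ^^ t) G"

definition CK_vertex :: "nat \<Rightarrow> nat \<Rightarrow> nat list \<Rightarrow> bool" where
  "CK_vertex d l a \<longleftrightarrow> length a = l \<and> (\<forall>i<l. a ! i \<le> d)
     \<and> (\<forall>i. i + 1 < l \<longrightarrow> a ! i \<noteq> a ! (i + 1))
     \<and> a ! 0 \<noteq> a ! (l - 1)"

definition CK :: "nat \<Rightarrow> nat \<Rightarrow> nat list vtx digraph" where
  "CK d l =
     ({Base a | a. CK_vertex d l a},
      {(Base a, Base b) | a b. CK_vertex d l a \<and> CK_vertex d l b
          \<and> (\<forall>i. i + 1 < l \<longrightarrow> b ! i = a ! (i + 1))})"

end

theory Submission
  imports Defs
begin

fun word :: "'a list vtx \<Rightarrow> 'a list" where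
  "word (Base a) = a"
| "word (Arc u v) = word u @ [last (word v)]"

definition Valid :: "nat \<Rightarrow> nat \<Rightarrow> nat \<Rightarrow> nat list set" where
  "Valid d l n = {w. length w = n \<and> (\<forall>j. j + l \<le> n \<longrightarrow> CK_vertex d l (take l (drop j w)))}"

lemma verts_line: "verts (line_digraph H) = {Arc u v | u v. (u, v) \<in> arcs H}"
  by (simp add: line_digraph_def verts_def)

lemma arcs_line: "arcs (line_digraph H) =
   {(Arc u v, Arc v' w) | u v v' w. (u, v) \<in> arcs H \<and> (v', w) \<in> arcs H \<and> v' = v}"
  by (simp add: line_digraph_def arcs_def)

lemma iter_Suc: "iter_line_digraph (Suc t) G = line_digraph (iter_line_digraph t G)"
  by (simp add: iter_line_digraph_def)

lemma tl_butlast_nth: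
  assumes "length a = l" "length b = l"
  shows "(\<forall>i. i + 1 < l \<longrightarrow> b ! i = a ! (i + 1)) \<longleftrightarrow> tl a = butlast b"
proof
  assume H: "\<forall>i. i + 1 < l \<longrightarrow> b ! i = a ! (i + 1)"
  show "tl a = butlast b"
    by (rule nth_equalityI) (use assms H in \<open>auto simp: nth_tl nth_butlast\<close>)
next
  assume H: "tl a = butlast b"
  show "\<forall>i. i + 1 < l \<longrightarrow> b ! i = a ! (i + 1)"
  proof (intro allI impI)
    fix i assume "i + 1 < l"
    then have "tl a ! i = butlast b ! i" using H by simp
    then show "b ! i = a ! (i + 1)" using assms \<open>i + 1 < l\<close> by (simp add: nth_tl nth_butlast)
  qed
qed

lemma Valid_step:
  assumes "l \<ge> 1" "n \<ge> l"
  shows "Valid d l (Suc n) = {w. length w = Suc n \<and> butlast w \<in> Valid d l n \<and> tl w \<in> Valid d l n}"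
proof (intro set_eqI iffI)
  fix w assume w: "w \<in> Valid d l (Suc n)"
  then have len: "length w = Suc n" by (simp add: Valid_def)
  have "butlast w \<in> Valid d l n"
  proof -
    { fix j assume j: "j + l \<le> n"
      have "take l (drop j (butlast w)) = take l (drop j w)"
        using j len by (simp add: butlast_conv_take drop_take take_take min_def)
      moreover have "CK_vertex d l (take l (drop j w))" using w j by (simp add: Valid_def)
      ultimately have "CK_vertex d l (take l (drop j (butlast w)))" by simp }
    then show ?thesis using len by (simp add: Valid_def)
  qed
  moreover have "tl w \<in> Valid d l n"
  proof -
    { fix j assume j: "j + l \<le> n"
      have "take l (drop j (tl w)) = take l (drop (Suc j) w)"
        by (simp add: drop_Suc drop_tl)
      moreover have "CK_vertex d l (take l (drop (Suc j) w))" using w j len by (simp add: Valid_def)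
      ultimately have "CK_vertex d l (take l (drop j (tl w)))" by simp }
    then show ?thesis using len by (simp add: Valid_def)
  qed
  ultimately show "w \<in> {w. length w = Suc n \<and> butlast w \<in> Valid d l n \<and> tl w \<in> Valid d l n}"
    using len by simp
next
  fix w assume w: "w \<in> {w. length w = Suc n \<and> butlast w \<in> Valid d l n \<and> tl w \<in> Valid d l n}"
  then have len: "length w = Suc n" and b: "butlast w \<in> Valid d l n" and c: "tl w \<in> Valid d l n" by auto
  { fix j assume j: "j + l \<le> Suc n"
    have "CK_vertex d l (take l (drop j w))"
    proof (cases "j + l \<le> n")
      case True
      have "take l (drop j (butlast w)) = take l (drop j w)"
        using True len by (simp add: butlast_conv_take drop_take take_take min_def)
      moreover have "CK_vertex d l (take l (drop j (butlast w)))" using b True unfolding Valid_def by blast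
      ultimately show ?thesis by simp
    next
      case False
      then obtain j' where j': "j = Suc j'" using assms j by (cases j) auto
      have "take l (drop j' (tl w)) = take l (drop j w)"
        using j' by (simp add: drop_Suc drop_tl)
      moreover have "CK_vertex d l (take l (drop j' (tl w)))" using c j j' unfolding Valid_def by auto
      ultimately show ?thesis by simp
    qed }
  then show "w \<in> Valid d l (Suc n)" using len by (simp add: Valid_def)
qed

lemma Valid_len: "w \<in> Valid d l n \<Longrightarrow> length w = n"
  by (simp add: Valid_def)

lemma graph_base:
  shows "inj_on word (verts (CK d l)) \<and> word ` verts (CK d l) = Valid d l l
    \<and> (\<forall>X Y. (X, Y) \<in> arcs (CK d l) \<longleftrightarrow>
          X \<in> verts (CK d l) \<and> Y \<in> verts (CK d l) \<and> tl (word X) = butlast (word Y))"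
proof (intro conjI allI)
  show "inj_on word (verts (CK d l))"
    by (auto simp: inj_on_def CK_def verts_def)
  have "Valid d l l = {a. CK_vertex d l a}"
    by (auto simp: Valid_def CK_vertex_def)
  moreover have "word ` {Base a |a. CK_vertex d l a} = {a. CK_vertex d l a}"
    by (auto simp: setcompr_eq_image image_image)
  ultimately show "word ` verts (CK d l) = Valid d l l"
    by (simp add: CK_def verts_def)
  fix X Y
  show "(X, Y) \<in> arcs (CK d l) \<longleftrightarrow>
          X \<in> verts (CK d l) \<and> Y \<in> verts (CK d l) \<and> tl (word X) = butlast (word Y)"
  proof
    assume "(X, Y) \<in> arcs (CK d l)"
    then obtain a b where "X = Base a" "Y = Base b" "CK_vertex d l a" "CK_vertex d l b"
       "\<forall>i. i + 1 < l \<longrightarrow> b ! i = a ! (i + 1)"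
      by (auto simp: CK_def arcs_def)
    moreover then have "tl a = butlast b" using tl_butlast_nth[of a l b]
      by (simp add: CK_vertex_def)
    ultimately show "X \<in> verts (CK d l) \<and> Y \<in> verts (CK d l) \<and> tl (word X) = butlast (word Y)"
      by (auto simp: CK_def verts_def)
  next
    assume "X \<in> verts (CK d l) \<and> Y \<in> verts (CK d l) \<and> tl (word X) = butlast (word Y)"
    then obtain a b where "X = Base a" "Y = Base b" "CK_vertex d l a" "CK_vertex d l b"
       "tl a = butlast b"
      by (auto simp: CK_def verts_def)
    moreover then have "\<forall>i. i + 1 < l \<longrightarrow> b ! i = a ! (i + 1)" using tl_butlast_nth[of a l b]
      by (simp add: CK_vertex_def)
    ultimately show "(X, Y) \<in> arcs (CK d l)"
      by (auto simp: CK_def arcs_def)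
  qed
qed

lemma graph_main:
  assumes "l \<ge> 2"
  shows "inj_on word (verts (iter_line_digraph t (CK d l)))
    \<and> word ` verts (iter_line_digraph t (CK d l)) = Valid d l (l + t)
    \<and> (\<forall>X Y. (X, Y) \<in> arcs (iter_line_digraph t (CK d l)) \<longleftrightarrow>
          X \<in> verts (iter_line_digraph t (CK d l)) \<and> Y \<in> verts (iter_line_digraph t (CK d l))
          \<and> tl (word X) = butlast (word Y))"
proof (induction t)
  case 0
  then show ?case using graph_base[of d l] by (simp add: iter_line_digraph_def)
next
  case (Suc t)
  define H where "H = iter_line_digraph t (CK d l)"
  have G: "iter_line_digraph (Suc t) (CK d l) = line_digraph H" by (simp add: H_def iter_Suc)
  have inj: "inj_on word (verts H)" and img: "word ` verts H = Valid d l (l + t)"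
    and arc: "\<And>X Y. (X, Y) \<in> arcs H \<longleftrightarrow> X \<in> verts H \<and> Y \<in> verts H \<and> tl (word X) = butlast (word Y)"
    using Suc.IH unfolding H_def by blast+
  have len: "\<And>x. x \<in> verts H \<Longrightarrow> length (word x) = l + t"
    using img Valid_len by blast
  have key: "\<And>x y. (x, y) \<in> arcs H \<Longrightarrow> word y = tl (word x) @ [last (word y)]"
  proof -
    fix x y assume xy: "(x, y) \<in> arcs H"
    then have "y \<in> verts H" "tl (word x) = butlast (word y)" using arc by auto
    moreover then have "word y \<noteq> []" using len assms by fastforce
    ultimately show "word y = tl (word x) @ [last (word y)]" by simp
  qed
  have wA: "\<And>x y. (x, y) \<in> arcs H \<Longrightarrow> tl (word (Arc x y)) = word y"
  proof -
    fix x y assume xy: "(x, y) \<in> arcs H"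
    then have "x \<in> verts H" using arc by auto
    then have "word x \<noteq> []" using len assms by fastforce
    then show "tl (word (Arc x y)) = word y" using key[OF xy] by simp
  qed
  have bA: "\<And>x y. butlast (word (Arc x y)) = word x" by simp
  show ?case unfolding G
  proof (intro conjI allI)
    show "inj_on word (verts (line_digraph H))"
    proof (rule inj_onI)
      fix X Y assume X: "X \<in> verts (line_digraph H)" and Y: "Y \<in> verts (line_digraph H)"
        and eq: "word X = word Y"
      obtain x y where Xd: "X = Arc x y" "(x, y) \<in> arcs H" using X by (auto simp: verts_line)
      obtain x' y' where Yd: "Y = Arc x' y'" "(x', y') \<in> arcs H" using Y by (auto simp: verts_line)
      have "word x = word x'" using eq Xd Yd by simp
      moreover have "x \<in> verts H" "x' \<in> verts H" "y \<in> verts H" "y' \<in> verts H"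
        using Xd Yd arc by auto
      ultimately have "x = x'" using inj by (simp add: inj_on_def)
      have "word y = word y'" using wA[OF Xd(2)] wA[OF Yd(2)] eq Xd(1) Yd(1) by metis
      then have "y = y'" using inj \<open>y \<in> verts H\<close> \<open>y' \<in> verts H\<close> by (simp add: inj_on_def)
      then show "X = Y" using Xd Yd \<open>x = x'\<close> by simp
    qed
    show "word ` verts (line_digraph H) = Valid d l (l + Suc t)"
    proof (intro set_eqI iffI)
      fix w assume "w \<in> word ` verts (line_digraph H)"
      then obtain x y where xy: "(x, y) \<in> arcs H" and w: "w = word (Arc x y)"
        by (auto simp: verts_line)
      have xv: "x \<in> verts H" and yv: "y \<in> verts H" using xy arc by auto
      have "length w = Suc (l + t)" using w len[OF xv] by simp
      moreover have "butlast w \<in> Valid d l (l + t)" using w img xv by auto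
      moreover have "tl w \<in> Valid d l (l + t)" using w wA[OF xy] img yv by auto
      ultimately show "w \<in> Valid d l (l + Suc t)"
        using Valid_step[of l "l + t" d] assms by simp
    next
      fix w assume "w \<in> Valid d l (l + Suc t)"
      then have w: "length w = Suc (l + t)" "butlast w \<in> Valid d l (l + t)" "tl w \<in> Valid d l (l + t)"
        using Valid_step[of l "l + t" d] assms by auto
      obtain x where x: "x \<in> verts H" "word x = butlast w" using w img by (metis imageE)
      obtain y where y: "y \<in> verts H" "word y = tl w" using w img by (metis imageE)
      have "tl (word x) = butlast (word y)" using x y by (simp add: butlast_tl)
      then have xy: "(x, y) \<in> arcs H" using arc x y by simp
      have "w \<noteq> []" using w(1) by auto
      have "tl w \<noteq> []" using w(1) assms by (cases w) auto
      have "word (Arc x y) = w" using \<open>w \<noteq> []\<close> \<open>tl w \<noteq> []\<close> x y by (simp add: last_tl)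
      moreover have "Arc x y \<in> verts (line_digraph H)" using xy by (auto simp: verts_line)
      ultimately show "w \<in> word ` verts (line_digraph H)" by (metis image_eqI)
    qed
    fix X Y
    show "(X, Y) \<in> arcs (line_digraph H) \<longleftrightarrow>
        X \<in> verts (line_digraph H) \<and> Y \<in> verts (line_digraph H) \<and> tl (word X) = butlast (word Y)"
    proof
      assume "(X, Y) \<in> arcs (line_digraph H)"
      then obtain x y z where "X = Arc x y" "Y = Arc y z" "(x, y) \<in> arcs H" "(y, z) \<in> arcs H"
        by (auto simp: arcs_line)
      then show "X \<in> verts (line_digraph H) \<and> Y \<in> verts (line_digraph H) \<and> tl (word X) = butlast (word Y)"
        using wA by (auto simp: verts_line)
    next
      assume A: "X \<in> verts (line_digraph H) \<and> Y \<in> verts (line_digraph H) \<and> tl (word X) = butlast (word Y)"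
      obtain x y where Xd: "X = Arc x y" "(x, y) \<in> arcs H" using A by (auto simp: verts_line)
      obtain y' z where Yd: "Y = Arc y' z" "(y', z) \<in> arcs H" using A by (auto simp: verts_line)
      have "word y = word y'" using A Xd Yd wA[OF Xd(2)] by simp
      moreover have "y \<in> verts H" "y' \<in> verts H" using Xd Yd arc by auto
      ultimately have "y = y'" using inj by (simp add: inj_on_def)
      then show "(X, Y) \<in> arcs (line_digraph H)" using Xd Yd by (auto simp: arcs_line)
    qed
  qed
qed

lemma card_verts:
  assumes "l \<ge> 2"
  shows "card (verts (iter_line_digraph t (CK d l))) = card (Valid d l (l + t))"
  using graph_main[OF assms, of t d] card_image by metis

definition Cw :: "nat \<Rightarrow> nat \<Rightarrow> nat \<Rightarrow> nat list set" where
  "Cw d l n = {w. length w = n \<and> set w \<subseteq> {..d} \<and> successively (\<noteq>) w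
                 \<and> (\<forall>j. j + l \<le> n \<longrightarrow> w ! j \<noteq> w ! (j + l - 1))}"

lemma window_nth:
  assumes "j + l \<le> length w" "i < l"
  shows "take l (drop j w) ! i = w ! (j + i)"
  using assms by (simp add: add.commute)

lemma Valid_Cw:
  assumes "l \<ge> 2" "n \<ge> l"
  shows "Valid d l n = Cw d l n"
proof (intro set_eqI iffI)
  fix w assume w: "w \<in> Valid d l n"
  then have len: "length w = n" by (simp add: Valid_def)
  have V: "\<And>j. j + l \<le> n \<Longrightarrow> CK_vertex d l (take l (drop j w))" using w by (simp add: Valid_def)
  have "set w \<subseteq> {..d}"
  proof
    fix a assume "a \<in> set w"
    then obtain i where i: "i < n" "w ! i = a" using len by (auto simp: in_set_conv_nth)
    define j where "j = min i (n - l)"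
    have j: "j + l \<le> n" "j \<le> i" "i - j < l" using i assms unfolding j_def by auto
    have "take l (drop j w) ! (i - j) \<le> d" using V[OF j(1)] j(3) by (simp add: CK_vertex_def)
    then show "a \<in> {..d}" using window_nth[of j l w "i - j"] j len i by simp
  qed
  moreover have "successively (\<noteq>) w"
    unfolding successively_conv_nth
  proof (intro allI impI)
    fix i assume i: "Suc i < length w"
    define j where "j = min i (n - l)"
    have j: "j + l \<le> n" "j \<le> i" "i - j + 1 < l" using i assms len unfolding j_def by auto
    have "take l (drop j w) ! (i - j) \<noteq> take l (drop j w) ! (i - j + 1)"
      using V[OF j(1)] j(3) by (simp add: CK_vertex_def)
    then show "w ! i \<noteq> w ! Suc i"
      using window_nth[of j l w "i - j"] window_nth[of j l w "i - j + 1"] j len by simp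
  qed
  moreover have "\<forall>j. j + l \<le> n \<longrightarrow> w ! j \<noteq> w ! (j + l - 1)"
  proof (intro allI impI)
    fix j assume j: "j + l \<le> n"
    have "take l (drop j w) ! 0 \<noteq> take l (drop j w) ! (l - 1)"
      using V[OF j] by (simp add: CK_vertex_def)
    then show "w ! j \<noteq> w ! (j + l - 1)"
      using window_nth[of j l w 0] window_nth[of j l w "l - 1"] j len assms by simp
  qed
  ultimately show "w \<in> Cw d l n" using len by (simp add: Cw_def)
next
  fix w assume w: "w \<in> Cw d l n"
  then have len: "length w = n" and S: "set w \<subseteq> {..d}" and A: "successively (\<noteq>) w"
    and C: "\<And>j. j + l \<le> n \<Longrightarrow> w ! j \<noteq> w ! (j + l - 1)" by (auto simp: Cw_def)
  have "CK_vertex d l (take l (drop j w))" if j: "j + l \<le> n" for j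
    unfolding CK_vertex_def
  proof (intro conjI allI impI)
    show "length (take l (drop j w)) = l" using j len by simp
    fix i assume i: "i < l"
    have "w ! (j + i) \<in> set w" using i j len by simp
    then have "w ! (j + i) \<le> d" using S by blast
    then show "take l (drop j w) ! i \<le> d" using window_nth[of j l w i] i j len S by auto
  next
    fix i assume i: "i + 1 < l"
    have "w ! (j + i) \<noteq> w ! Suc (j + i)" using successively_nth[OF A, of "j + i"] i j len by simp
    then show "take l (drop j w) ! i \<noteq> take l (drop j w) ! (i + 1)"
      using window_nth[of j l w i] window_nth[of j l w "i + 1"] i j len by simp
  next
    show "take l (drop j w) ! 0 \<noteq> take l (drop j w) ! (l - 1)"
      using C[OF j] window_nth[of j l w 0] window_nth[of j l w "l - 1"] j len assms by simp
  qed
  then show "w \<in> Valid d l n" using len by (simp add: Valid_def)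
qed

definition LadSet :: "nat \<Rightarrow> nat \<Rightarrow> (nat list \<times> nat list) set" where
  "LadSet d t = {(xs, ys). length xs = Suc t \<and> length ys = Suc t \<and> set xs \<subseteq> {..d} \<and> set ys \<subseteq> {..d}
      \<and> successively (\<noteq>) xs \<and> successively (\<noteq>) ys \<and> list_all2 (\<noteq>) xs ys}"

definition Wk :: "nat \<Rightarrow> nat \<Rightarrow> nat \<Rightarrow> nat \<Rightarrow> nat list set" where
  "Wk d a b n = {ms. length ms = n \<and> set ms \<subseteq> {..d} \<and> successively (\<noteq>) (a # ms @ [b])}"

lemma finite_LadSet: "finite (LadSet d t)"
proof -
  have "LadSet d t \<subseteq> {xs. set xs \<subseteq> {..d} \<and> length xs = Suc t} \<times> {xs. set xs \<subseteq> {..d} \<and> length xs = Suc t}"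
    by (auto simp: LadSet_def)
  then show ?thesis by (rule finite_subset) (intro finite_cartesian_product finite_lists_length_eq finite_atMost)
qed

lemma finite_Wk: "finite (Wk d a b n)"
proof -
  have "Wk d a b n \<subseteq> {xs. set xs \<subseteq> {..d} \<and> length xs = n}"
    by (auto simp: Wk_def)
  then show ?thesis by (rule finite_subset) (intro finite_lists_length_eq finite_atMost)
qed

lemma succ3:
  assumes "xs \<noteq> []" "ys \<noteq> []"
  shows "successively P (xs @ ms @ ys) \<longleftrightarrow>
    successively P xs \<and> successively P ys \<and> successively P (last xs # ms @ [hd ys])"
  using assms by (cases ms) (auto simp: successively_append_iff successively_Cons hd_append)

lemma decomp_iff:
  assumes l: "l = t + k + 1" and k: "k \<ge> 1"
    and lx: "length xs = Suc t" and lm: "length ms = k - 1" and ly: "length ys = Suc t"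
  shows "xs @ ms @ ys \<in> Cw d l (l + t) \<longleftrightarrow>
     (xs, ys) \<in> LadSet d t \<and> ms \<in> Wk d (last xs) (hd ys) (k - 1)"
proof -
  have ne: "xs \<noteq> []" "ys \<noteq> []" using lx ly by auto
  have len: "length (xs @ ms @ ys) = l + t" using lx lm ly l k by simp
  have chord: "(\<forall>j. j + l \<le> l + t \<longrightarrow> (xs @ ms @ ys) ! j \<noteq> (xs @ ms @ ys) ! (j + l - 1))
      \<longleftrightarrow> list_all2 (\<noteq>) xs ys"
  proof -
    have "\<And>j. j \<le> t \<Longrightarrow> (xs @ ms @ ys) ! j = xs ! j" using lx by (simp add: nth_append)
    moreover have "\<And>j. j \<le> t \<Longrightarrow> (xs @ ms @ ys) ! (j + l - 1) = ys ! j"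
    proof -
      fix j assume "j \<le> t"
      have "(xs @ ms @ ys) ! (j + l - 1) = ((xs @ ms) @ ys) ! (length (xs @ ms) + j)"
        using lx lm l k by (simp add: add_ac)
      also have "\<dots> = ys ! j" by (rule nth_append_length_plus)
      finally show "(xs @ ms @ ys) ! (j + l - 1) = ys ! j" .
    qed
    ultimately show ?thesis using lx ly
      by (auto simp: list_all2_conv_all_nth less_Suc_eq_le)
  qed
  show ?thesis
    unfolding Cw_def LadSet_def Wk_def using len chord succ3[OF ne] lx ly lm
    by auto
qed

lemma card_Cw_sum:
  assumes l: "l = t + k + 1" and k: "k \<ge> 1"
  shows "card (Cw d l (l + t)) = (\<Sum>(xs, ys)\<in>LadSet d t. card (Wk d (last xs) (hd ys) (k - 1)))"
proof -
  let ?f = "\<lambda>((xs, ys), ms). xs @ ms @ ys"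
  let ?S = "Sigma (LadSet d t) (\<lambda>(xs, ys). Wk d (last xs) (hd ys) (k - 1))"
  have "bij_betw ?f ?S (Cw d l (l + t))"
    unfolding bij_betw_def
  proof
    show "inj_on ?f ?S"
    proof (rule inj_onI)
      fix p q assume A: "p \<in> ?S" "q \<in> ?S" and eq0: "?f p = ?f q"
      obtain xs ys ms where p: "p = ((xs, ys), ms)" by (metis prod.exhaust)
      obtain xs' ys' ms' where q: "q = ((xs', ys'), ms')" by (metis prod.exhaust)
      have eq: "xs @ ms @ ys = xs' @ ms' @ ys'" using eq0 p q by simp
      have "length xs = length xs'" "length ms = length ms'"
        using A p q by (auto simp: LadSet_def Wk_def)
      then have "xs = xs' \<and> ys = ys' \<and> ms = ms'" using eq by auto
      then show "p = q" using p q by simp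
    qed
    show "?f ` ?S = Cw d l (l + t)"
    proof (intro set_eqI iffI)
      fix w assume "w \<in> ?f ` ?S"
      then obtain xs ys ms where "((xs, ys), ms) \<in> ?S" "w = xs @ ms @ ys" by auto
      then show "w \<in> Cw d l (l + t)"
        using decomp_iff[OF l k, of xs ms ys d] by (auto simp: LadSet_def Wk_def)
    next
      fix w assume w: "w \<in> Cw d l (l + t)"
      then have lw: "length w = l + t" by (simp add: Cw_def)
      define xs where "xs = take (Suc t) w"
      define ms where "ms = take (k - 1) (drop (Suc t) w)"
      define ys where "ys = drop (t + k) w"
      have "w = xs @ ms @ ys"
      proof -
        have "take (k - 1) (drop (Suc t) w) @ drop (t + k) w = drop (Suc t) w"
        proof -
          have "drop (k - 1) (drop (Suc t) w) = drop (t + k) w" using k by (simp add: add.commute)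
          then show ?thesis by (metis append_take_drop_id)
        qed
        then show ?thesis unfolding xs_def ms_def ys_def by simp
      qed
      moreover have "length xs = Suc t" "length ms = k - 1" "length ys = Suc t"
        using lw l k unfolding xs_def ms_def ys_def by auto
      ultimately have "(xs, ys) \<in> LadSet d t \<and> ms \<in> Wk d (last xs) (hd ys) (k - 1)"
        using decomp_iff[OF l k, of xs ms ys d] w by simp
      then show "w \<in> ?f ` ?S" using \<open>w = xs @ ms @ ys\<close> by force
    qed
  qed
  then have "card (Cw d l (l + t)) = card ?S" by (simp add: bij_betw_same_card)
  also have "\<dots> = (\<Sum>(xs, ys)\<in>LadSet d t. card (Wk d (last xs) (hd ys) (k - 1)))"
    using finite_LadSet finite_Wk by (simp add: card_SigmaI split_def)
  finally show ?thesis .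
qed

lemma Wk_0: "card (Wk d a b 0) = (if a \<noteq> b then 1 else 0)"
proof -
  have "Wk d a b 0 = (if a \<noteq> b then {[]} else {})" by (auto simp: Wk_def)
  then show ?thesis by simp
qed

lemma Wk_Suc: "card (Wk d a b (Suc n)) = (\<Sum>c\<in>{..d} - {a}. card (Wk d c b n))"
proof -
  let ?S = "Sigma ({..d} - {a}) (\<lambda>c. Wk d c b n)"
  have "bij_betw (\<lambda>(c, ms). c # ms) ?S (Wk d a b (Suc n))"
    unfolding bij_betw_def
  proof
    show "inj_on (\<lambda>(c, ms). c # ms) ?S" by (auto simp: inj_on_def)
    show "(\<lambda>(c, ms). c # ms) ` ?S = Wk d a b (Suc n)"
    proof (intro set_eqI iffI)
      fix w assume "w \<in> (\<lambda>(c, ms). c # ms) ` ?S"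
      then show "w \<in> Wk d a b (Suc n)" by (auto simp: Wk_def)
    next
      fix w assume w: "w \<in> Wk d a b (Suc n)"
      then obtain c ms where cm: "w = c # ms" by (cases w) (auto simp: Wk_def)
      then have "(c, ms) \<in> ?S" using w by (auto simp: Wk_def)
      then show "w \<in> (\<lambda>(c, ms). c # ms) ` ?S" using cm by force
    qed
  qed
  then have "card (Wk d a b (Suc n)) = card ?S" by (simp add: bij_betw_same_card)
  then show ?thesis using finite_Wk by simp
qed

lemma Wk_card:
  assumes "a \<le> d" "b \<le> d"
  shows "(real d + 1) * real (card (Wk d a b n)) =
     real d ^ (n + 1) - (-1) ^ (n + 1) + (if a = b then (real d + 1) * (-1) ^ (n + 1) else 0)"
  using assms(1)
proof (induction n arbitrary: a)
  case 0
  then show ?case by (simp add: Wk_0)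
next
  case (Suc n)
  have cd: "card ({..d} - {a}) = d" using Suc.prems by simp
  have "(real d + 1) * real (card (Wk d a b (Suc n)))
      = (\<Sum>c\<in>{..d} - {a}. (real d + 1) * real (card (Wk d c b n)))"
    by (simp add: Wk_Suc sum_distrib_left)
  also have "\<dots> = (\<Sum>c\<in>{..d} - {a}. (real d ^ (n + 1) - (-1) ^ (n + 1))
       + (if b = c then (real d + 1) * (-1) ^ (n + 1) else 0))"
    by (intro sum.cong refl) (use Suc.IH in \<open>auto\<close>)
  also have "\<dots> = real d * (real d ^ (n + 1) - (-1) ^ (n + 1))
       + (if a \<noteq> b then (real d + 1) * (-1) ^ (n + 1) else 0)"
    using assms(2) cd by (simp add: sum.distrib sum.delta)
  also have "\<dots> = real d ^ (Suc n + 1) - (-1) ^ (Suc n + 1)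
       + (if a = b then (real d + 1) * (-1) ^ (Suc n + 1) else 0)"
    by (cases "a = b") (auto simp: algebra_simps)
  finally show ?case .
qed

definition Ext :: "nat \<Rightarrow> nat \<Rightarrow> nat \<Rightarrow> (nat \<times> nat) set" where
  "Ext d x y = {(a, b). a \<le> d \<and> b \<le> d \<and> a \<noteq> b \<and> a \<noteq> x \<and> b \<noteq> y}"

lemma finite_Ext: "finite (Ext d x y)"
  by (rule finite_subset[of _ "{..d} \<times> {..d}"]) (auto simp: Ext_def)

lemma lad_props:
  assumes "(xs, ys) \<in> LadSet d t"
  shows "xs \<noteq> [] \<and> ys \<noteq> [] \<and> last xs \<noteq> last ys \<and> last xs \<le> d \<and> last ys \<le> d \<and> hd ys \<le> d"
proof -
  have L: "length xs = Suc t" "length ys = Suc t" "set xs \<subseteq> {..d}" "set ys \<subseteq> {..d}"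
    "list_all2 (\<noteq>) xs ys" using assms by (auto simp: LadSet_def)
  have ne: "xs \<noteq> []" "ys \<noteq> []" using L by auto
  have n1: "xs ! t \<noteq> ys ! t" using list_all2_nthD[OF L(5), of t] L by simp
  have n2: "last xs = xs ! t" "last ys = ys ! t" using L(1,2) ne by (simp_all add: last_conv_nth)
  have m: "last xs \<le> d" "last ys \<le> d" "hd ys \<le> d"
    using L(3,4) last_in_set[OF ne(1)] last_in_set[OF ne(2)] hd_in_set[OF ne(2)] by blast+
  have "last xs \<noteq> last ys" using n1 n2 by simp
  then show ?thesis using ne m by blast
qed

lemma Lad_mem_Suc:
  assumes "length xs = Suc t" "length ys = Suc t"
  shows "(xs @ [a], ys @ [b]) \<in> LadSet d (Suc t) \<longleftrightarrow>
    (xs, ys) \<in> LadSet d t \<and> (a, b) \<in> Ext d (last xs) (last ys)"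
  using assms by (auto simp: LadSet_def Ext_def successively_append_iff list_all2_append)

lemma Lad_count:
  "card {L \<in> LadSet d (Suc t). Q L} =
    (\<Sum>(xs, ys)\<in>LadSet d t. card {e \<in> Ext d (last xs) (last ys). Q (xs @ [fst e], ys @ [snd e])})"
proof -
  let ?f = "\<lambda>((xs, ys), e). (xs @ [fst e], ys @ [snd e])"
  let ?S = "Sigma (LadSet d t) (\<lambda>(xs, ys). {e \<in> Ext d (last xs) (last ys). Q (xs @ [fst e], ys @ [snd e])})"
  have "bij_betw ?f ?S {L \<in> LadSet d (Suc t). Q L}"
    unfolding bij_betw_def
  proof
    show "inj_on ?f ?S"
    proof (rule inj_onI)
      fix p q assume A: "p \<in> ?S" "q \<in> ?S" and eq0: "?f p = ?f q"
      obtain xs ys e where p: "p = ((xs, ys), e)" by (metis prod.exhaust)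
      obtain xs' ys' e' where q: "q = ((xs', ys'), e')" by (metis prod.exhaust)
      have "xs @ [fst e] = xs' @ [fst e']" "ys @ [snd e] = ys' @ [snd e']" using eq0 p q by auto
      then have "xs = xs'" "ys = ys'" "e = e'" by (auto simp: prod_eq_iff)
      then show "p = q" using p q by simp
    qed
    show "?f ` ?S = {L \<in> LadSet d (Suc t). Q L}"
    proof (intro set_eqI iffI)
      fix L assume "L \<in> ?f ` ?S"
      then obtain xs ys e where "(xs, ys) \<in> LadSet d t" "e \<in> Ext d (last xs) (last ys)"
        "Q (xs @ [fst e], ys @ [snd e])" "L = (xs @ [fst e], ys @ [snd e])" by auto
      moreover then have "length xs = Suc t" "length ys = Suc t" by (auto simp: LadSet_def)
      ultimately show "L \<in> {L \<in> LadSet d (Suc t). Q L}"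
        using Lad_mem_Suc[of xs t ys "fst e" "snd e" d] by simp
    next
      fix L assume L: "L \<in> {L \<in> LadSet d (Suc t). Q L}"
      obtain XS YS where LL: "L = (XS, YS)" by (metis prod.exhaust)
      have lens: "length XS = Suc (Suc t)" "length YS = Suc (Suc t)" using L LL by (auto simp: LadSet_def)
      define xs where "xs = butlast XS"
      define ys where "ys = butlast YS"
      have XS: "XS = xs @ [last XS]" and YS: "YS = ys @ [last YS]"
        using lens unfolding xs_def ys_def by (metis append_butlast_last_id list.size(3) nat.distinct(1))+
      have l2: "length xs = Suc t" "length ys = Suc t" using lens unfolding xs_def ys_def by auto
      have "(xs, ys) \<in> LadSet d t \<and> (last XS, last YS) \<in> Ext d (last xs) (last ys)"
        using Lad_mem_Suc[OF l2, of "last XS" "last YS" d] L LL XS YS by simp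
      moreover have "Q (xs @ [last XS], ys @ [last YS])" using L LL XS YS by simp
      ultimately have mem: "((xs, ys), (last XS, last YS)) \<in> ?S" by simp
      have feq: "?f ((xs, ys), (last XS, last YS)) = L" using LL XS YS by simp
      show "L \<in> ?f ` ?S" by (rule image_eqI[where f="?f", OF feq[symmetric] mem])
    qed
  qed
  then have "card ?S = card {L \<in> LadSet d (Suc t). Q L}" by (rule bij_betw_same_card)
  then have "card {L \<in> LadSet d (Suc t). Q L} = card ?S" by (rule sym)
  also have "\<dots> = (\<Sum>p\<in>LadSet d t. card ((\<lambda>(xs, ys). {e \<in> Ext d (last xs) (last ys). Q (xs @ [fst e], ys @ [snd e])}) p))"
    by (rule card_SigmaI[OF finite_LadSet]) (auto intro: finite_subset[OF _ finite_Ext])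
  also have "\<dots> = (\<Sum>(xs, ys)\<in>LadSet d t. card {e \<in> Ext d (last xs) (last ys). Q (xs @ [fst e], ys @ [snd e])})"
    by (rule sum.cong[OF refl]) (auto split: prod.splits)
  finally show ?thesis .
qed

lemma card_atMost_minus2:
  assumes "B \<le> d" "y \<le> d"
  shows "real (card ({..d} - {B, y})) = real d + 1 - (if y = B then 1 else 2)"
proof -
  have c: "card ({..d} - {B, y}) = card {..d} - card {B, y}" by (rule card_Diff_subset) (use assms in auto)
  have m: "card {B, y} \<le> card {..d}" by (rule card_mono) (use assms in auto)
  have "card {B, y} = (if y = B then 1 else 2)" by auto
  then show ?thesis using c m by (auto simp: of_nat_diff)
qed

lemma Ext_fst:
  assumes "x \<noteq> y" "x \<le> d" "y \<le> d" "B \<le> d"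
  shows "real (card {e \<in> Ext d x y. fst e = B}) =
    (real d - 1) - (real d - 1) * (if x = B then 1 else 0) + (if y = B then 1 else 0)"
proof (cases "x = B")
  case True
  then have "{e \<in> Ext d x y. fst e = B} = {}" by (auto simp: Ext_def)
  then have "card {e \<in> Ext d x y. fst e = B} = 0" by (simp only: card.empty)
  then show ?thesis using True assms by simp
next
  case False
  have "{e \<in> Ext d x y. fst e = B} = Pair B ` ({..d} - {B, y})"
    using False assms by (auto simp: Ext_def)
  moreover have "card (Pair B ` ({..d} - {B, y})) = card ({..d} - {B, y})"
    by (rule card_image) (auto simp: inj_on_def)
  ultimately have "card {e \<in> Ext d x y. fst e = B} = card ({..d} - {B, y})"
    by simp
  then show ?thesis using False card_atMost_minus2[of B d y] assms by auto
qed

lemma Ext_snd: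
  assumes "x \<noteq> y" "x \<le> d" "y \<le> d" "B \<le> d"
  shows "real (card {e \<in> Ext d x y. snd e = B}) =
    (real d - 1) - (real d - 1) * (if y = B then 1 else 0) + (if x = B then 1 else 0)"
proof (cases "y = B")
  case True
  then have "{e \<in> Ext d x y. snd e = B} = {}" by (auto simp: Ext_def)
  then have "card {e \<in> Ext d x y. snd e = B} = 0" by (simp only: card.empty)
  then show ?thesis using True assms by simp
next
  case False
  have "{e \<in> Ext d x y. snd e = B} = (\<lambda>a. (a, B)) ` ({..d} - {B, x})"
    using False assms by (auto simp: Ext_def)
  moreover have "card ((\<lambda>a. (a, B)) ` ({..d} - {B, x})) = card ({..d} - {B, x})"
    by (rule card_image) (auto simp: inj_on_def)
  ultimately have "card {e \<in> Ext d x y. snd e = B} = card ({..d} - {B, x})"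
    by simp
  then show ?thesis using False card_atMost_minus2[of B d x] assms by auto
qed

lemma Ext_all:
  assumes "x \<noteq> y" "x \<le> d" "y \<le> d"
  shows "real (card (Ext d x y)) = real d ^ 2 - real d + 1"
proof -
  have E: "Ext d x y = (\<Union>B\<in>{..d}. {e \<in> Ext d x y. fst e = B})" by (auto simp: Ext_def)
  have "card (Ext d x y) = (\<Sum>B\<in>{..d}. card {e \<in> Ext d x y. fst e = B})"
    by (subst E, rule card_UN_disjoint) (auto intro: finite_subset[OF _ finite_Ext])
  then have "real (card (Ext d x y)) = (\<Sum>B\<in>{..d}. real (card {e \<in> Ext d x y. fst e = B}))"
    by simp
  also have "\<dots> = (\<Sum>B\<in>{..d}. (real d - 1) - (real d - 1) * (if x = B then 1 else 0) + (if y = B then 1 else 0))"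
    by (rule sum.cong[OF refl]) (use assms Ext_fst in auto)
  also have "\<dots> = (real d + 1) * (real d - 1) - (real d - 1) + 1"
    using assms by (simp add: sum.distrib sum_subtractf sum_distrib_left[symmetric] sum.delta)
  also have "\<dots> = real d ^ 2 - real d + 1" by (simp add: algebra_simps power2_eq_square)
  finally show ?thesis .
qed

lemma ind_sum:
  assumes "finite A"
  shows "(\<Sum>x\<in>A. if P x then (1::real) else 0) = real (card {x \<in> A. P x})"
  using assms by (simp add: sum.inter_filter[symmetric])

lemma Lad_count':
  "card {L \<in> LadSet d (Suc t). Q L} =
    (\<Sum>L\<in>LadSet d t. card {e \<in> Ext d (last (fst L)) (last (snd L)). Q (fst L @ [fst e], snd L @ [snd e])})"
  unfolding Lad_count by (rule sum.cong[OF refl]) (auto split: prod.splits)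

definition LadN :: "nat \<Rightarrow> nat \<Rightarrow> real" where
  "LadN d t = real (card (LadSet d t))"
definition Ucnt :: "nat \<Rightarrow> nat \<Rightarrow> real" where
  "Ucnt d t = real (card {L \<in> LadSet d t. last (fst L) = hd (snd L)})"
definition Vcnt :: "nat \<Rightarrow> nat \<Rightarrow> real" where
  "Vcnt d t = real (card {L \<in> LadSet d t. last (snd L) = hd (snd L)})"

lemma lad_props': "L \<in> LadSet d t \<Longrightarrow>
   fst L \<noteq> [] \<and> snd L \<noteq> [] \<and> last (fst L) \<noteq> last (snd L) \<and> last (fst L) \<le> d \<and> last (snd L) \<le> d \<and> hd (snd L) \<le> d"
  using lad_props[of "fst L" "snd L" d t] by simp

lemma LadN_Suc: "LadN d (Suc t) = (real d ^ 2 - real d + 1) * LadN d t"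
proof -
  have "card (LadSet d (Suc t)) = card {L \<in> LadSet d (Suc t). True}" by simp
  also have "\<dots> = (\<Sum>L\<in>LadSet d t. card (Ext d (last (fst L)) (last (snd L))))"
    unfolding Lad_count' by simp
  finally have "LadN d (Suc t) = (\<Sum>L\<in>LadSet d t. real (card (Ext d (last (fst L)) (last (snd L)))))"
    unfolding LadN_def by simp
  also have "\<dots> = (\<Sum>L\<in>LadSet d t. real d ^ 2 - real d + 1)"
    by (rule sum.cong[OF refl]) (use lad_props' Ext_all in auto)
  finally show ?thesis by (simp add: LadN_def)
qed

lemma Ucnt_Suc: "Ucnt d (Suc t) = (real d - 1) * LadN d t - (real d - 1) * Ucnt d t + Vcnt d t"
proof -
  have "Ucnt d (Suc t) = (\<Sum>L\<in>LadSet d t. real (card {e \<in> Ext d (last (fst L)) (last (snd L)).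
        last (fst L @ [fst e]) = hd (snd L @ [snd e])}))"
    unfolding Ucnt_def Lad_count'[of d t "\<lambda>L. last (fst L) = hd (snd L)"] by simp
  also have "\<dots> = (\<Sum>L\<in>LadSet d t. (real d - 1) - (real d - 1) * (if last (fst L) = hd (snd L) then 1 else 0)
        + (if last (snd L) = hd (snd L) then 1 else 0))"
  proof (rule sum.cong[OF refl])
    fix L assume L: "L \<in> LadSet d t"
    note P = lad_props'[OF L]
    have "{e \<in> Ext d (last (fst L)) (last (snd L)). last (fst L @ [fst e]) = hd (snd L @ [snd e])}
       = {e \<in> Ext d (last (fst L)) (last (snd L)). fst e = hd (snd L)}" using P by simp
    then show "real (card {e \<in> Ext d (last (fst L)) (last (snd L)). last (fst L @ [fst e]) = hd (snd L @ [snd e])})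
      = (real d - 1) - (real d - 1) * (if last (fst L) = hd (snd L) then 1 else 0)
        + (if last (snd L) = hd (snd L) then 1 else 0)"
      using Ext_fst[of "last (fst L)" "last (snd L)" d "hd (snd L)"] P by simp
  qed
  also have "\<dots> = (real d - 1) * LadN d t - (real d - 1) * Ucnt d t + Vcnt d t"
    using finite_LadSet[of d t]
    by (simp add: sum.distrib sum_subtractf sum_distrib_left[symmetric] ind_sum LadN_def Ucnt_def Vcnt_def)
  finally show ?thesis .
qed

lemma Vcnt_Suc: "Vcnt d (Suc t) = (real d - 1) * LadN d t - (real d - 1) * Vcnt d t + Ucnt d t"
proof -
  have "Vcnt d (Suc t) = (\<Sum>L\<in>LadSet d t. real (card {e \<in> Ext d (last (fst L)) (last (snd L)).
        last (snd L @ [snd e]) = hd (snd L @ [snd e])}))"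
    unfolding Vcnt_def Lad_count'[of d t "\<lambda>L. last (snd L) = hd (snd L)"] by simp
  also have "\<dots> = (\<Sum>L\<in>LadSet d t. (real d - 1) - (real d - 1) * (if last (snd L) = hd (snd L) then 1 else 0)
        + (if last (fst L) = hd (snd L) then 1 else 0))"
  proof (rule sum.cong[OF refl])
    fix L assume L: "L \<in> LadSet d t"
    note P = lad_props'[OF L]
    have "{e \<in> Ext d (last (fst L)) (last (snd L)). last (snd L @ [snd e]) = hd (snd L @ [snd e])}
       = {e \<in> Ext d (last (fst L)) (last (snd L)). snd e = hd (snd L)}" using P by simp
    then show "real (card {e \<in> Ext d (last (fst L)) (last (snd L)). last (snd L @ [snd e]) = hd (snd L @ [snd e])})
      = (real d - 1) - (real d - 1) * (if last (snd L) = hd (snd L) then 1 else 0)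
        + (if last (fst L) = hd (snd L) then 1 else 0)"
      using Ext_snd[of "last (fst L)" "last (snd L)" d "hd (snd L)"] P by simp
  qed
  also have "\<dots> = (real d - 1) * LadN d t - (real d - 1) * Vcnt d t + Ucnt d t"
    using finite_LadSet[of d t]
    by (simp add: sum.distrib sum_subtractf sum_distrib_left[symmetric] ind_sum LadN_def Ucnt_def Vcnt_def)
  finally show ?thesis .
qed

lemma LadSet_0: "LadSet d 0 = (\<lambda>(a, b). ([a], [b])) ` ({..d} \<times> {..d} - (\<lambda>a. (a, a)) ` {..d})"
proof (intro set_eqI iffI)
  fix L assume L: "L \<in> LadSet d 0"
  obtain xs ys where LL: "L = (xs, ys)" by (metis prod.exhaust)
  have "length xs = 1" "length ys = 1" using L LL by (auto simp: LadSet_def)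
  then obtain a b where "xs = [a]" "ys = [b]" by (metis One_nat_def length_0_conv length_Suc_conv)
  then show "L \<in> (\<lambda>(a, b). ([a], [b])) ` ({..d} \<times> {..d} - (\<lambda>a. (a, a)) ` {..d})"
    using L LL by (auto simp: LadSet_def)
next
  fix L assume "L \<in> (\<lambda>(a, b). ([a], [b])) ` ({..d} \<times> {..d} - (\<lambda>a. (a, a)) ` {..d})"
  then show "L \<in> LadSet d 0" by (auto simp: LadSet_def)
qed

lemma Lcnt_0: "LadN d 0 = (real d + 1) * real d"
proof -
  have i: "inj_on (\<lambda>(a, b). ([a], [b])) ({..d} \<times> {..d} - (\<lambda>a. (a, a)) ` {..d})"
    by (auto simp: inj_on_def)
  have "card (LadSet d 0) = card ({..d} \<times> {..d} - (\<lambda>a. (a, a)) ` {..d})"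
    unfolding LadSet_0 by (rule card_image[OF i])
  also have "\<dots> = card ({..d} \<times> {..d}) - card ((\<lambda>a. (a, a)) ` {..d})"
    by (rule card_Diff_subset) auto
  also have "card ((\<lambda>a. (a, a)) ` {..d}) = card {..d}"
    by (rule card_image) (auto simp: inj_on_def)
  finally have "card (LadSet d 0) = (d + 1) * (d + 1) - (d + 1)" by (simp add: card_cartesian_product)
  then show ?thesis unfolding LadN_def by (simp add: of_nat_diff algebra_simps)
qed

lemma Ucnt_0: "Ucnt d 0 = 0"
proof -
  have "{L \<in> LadSet d 0. last (fst L) = hd (snd L)} = {}" unfolding LadSet_0 by auto
  then show ?thesis unfolding Ucnt_def by (simp only: card.empty of_nat_0)
qed

lemma Vcnt_0: "Vcnt d 0 = LadN d 0"
proof -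
  have "{L \<in> LadSet d 0. last (snd L) = hd (snd L)} = LadSet d 0" unfolding LadSet_0 by auto
  then show ?thesis unfolding Vcnt_def LadN_def by simp
qed

lemma closed_forms:
  "LadN d t = (real d + 1) * real d * (real d ^ 2 - real d + 1) ^ t
   \<and> Ucnt d t = real d * (real d ^ 2 - real d + 1) ^ t + 1/2 * (-1) ^ t * (real d - 2) ^ t * (real d - 1) * real d
        - 1/2 * (-1) ^ t * real d ^ (t + 1) * (real d + 1)
   \<and> Vcnt d t = Ucnt d t + (real d + 1) * real d * (-1) ^ t * real d ^ t"
proof (induction t)
  case 0
  then show ?case using Lcnt_0 Ucnt_0 Vcnt_0 by (simp add: field_simps)
next
  case (Suc t)
  have L: "LadN d t = (real d + 1) * real d * (real d ^ 2 - real d + 1) ^ t"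
    and U: "Ucnt d t = real d * (real d ^ 2 - real d + 1) ^ t + 1/2 * (-1) ^ t * (real d - 2) ^ t * (real d - 1) * real d
        - 1/2 * (-1) ^ t * real d ^ (t + 1) * (real d + 1)"
    and V: "Vcnt d t = Ucnt d t + (real d + 1) * real d * (-1) ^ t * real d ^ t"
    using Suc.IH by blast+
  show ?case unfolding LadN_Suc Ucnt_Suc Vcnt_Suc V U L
    by (simp add: power_Suc field_simps power2_eq_square)
qed

theorem theorem4:
  fixes d l t :: nat
  assumes "l \<ge> 3" and "d \<ge> 1" and "1 \<le> t" and "t \<le> l - 2"
  shows "real (card (verts (iter_line_digraph t (CK d l)))) =
           (real d ^ 2 - real d + 1) ^ t * real d ^ (l - t)
           + 1/2 * (-1) ^ (l + 1) * (real d - 2) ^ t * (real d - 1) * real d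
           + 1/2 * (-1) ^ l * real d ^ (t + 1) * (real d + 1)"
proof -
  define k where "k = l - t - 1"
  have k1: "k \<ge> 1" and lk: "l = t + k + 1" using assms unfolding k_def by auto
  have l2: "l \<ge> 2" using assms by simp
  have "card (verts (iter_line_digraph t (CK d l))) = card (Cw d l (l + t))"
    using card_verts[OF l2] Valid_Cw[OF l2, of "l + t" d] by simp
  also have "\<dots> = (\<Sum>(xs, ys)\<in>LadSet d t. card (Wk d (last xs) (hd ys) (k - 1)))"
    by (rule card_Cw_sum[OF lk k1])
  also have "\<dots> = (\<Sum>L\<in>LadSet d t. card (Wk d (last (fst L)) (hd (snd L)) (k - 1)))"
    by (rule sum.cong[OF refl]) (auto split: prod.splits)
  finally have N: "real (card (verts (iter_line_digraph t (CK d l))))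
      = (\<Sum>L\<in>LadSet d t. real (card (Wk d (last (fst L)) (hd (snd L)) (k - 1))))" by simp
  have "(real d + 1) * real (card (verts (iter_line_digraph t (CK d l))))
      = (\<Sum>L\<in>LadSet d t. (real d + 1) * real (card (Wk d (last (fst L)) (hd (snd L)) (k - 1))))"
    unfolding N by (simp add: sum_distrib_left)
  also have "\<dots> = (\<Sum>L\<in>LadSet d t. (real d ^ k - (-1) ^ k)
        + (real d + 1) * (-1) ^ k * (if last (fst L) = hd (snd L) then 1 else 0))"
  proof (rule sum.cong[OF refl])
    fix L assume L: "L \<in> LadSet d t"
    note P = lad_props'[OF L]
    have "(real d + 1) * real (card (Wk d (last (fst L)) (hd (snd L)) (k - 1))) =
      real d ^ (k - 1 + 1) - (-1) ^ (k - 1 + 1) +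
      (if last (fst L) = hd (snd L) then (real d + 1) * (-1) ^ (k - 1 + 1) else 0)"
      using Wk_card[of "last (fst L)" d "hd (snd L)" "k - 1"] P by simp
    then show "(real d + 1) * real (card (Wk d (last (fst L)) (hd (snd L)) (k - 1))) =
      (real d ^ k - (-1) ^ k) + (real d + 1) * (-1) ^ k * (if last (fst L) = hd (snd L) then 1 else 0)"
      using k1 by simp
  qed
  also have "\<dots> = (real d ^ k - (-1) ^ k) * LadN d t + (real d + 1) * (-1) ^ k * Ucnt d t"
    using finite_LadSet[of d t]
    by (simp add: sum.distrib sum_distrib_left[symmetric] ind_sum LadN_def Ucnt_def)
  finally have E: "(real d + 1) * real (card (verts (iter_line_digraph t (CK d l))))
     = (real d ^ k - (-1) ^ k) * LadN d t + (real d + 1) * (-1) ^ k * Ucnt d t" .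
  have L: "LadN d t = (real d + 1) * real d * (real d ^ 2 - real d + 1) ^ t"
    and U: "Ucnt d t = real d * (real d ^ 2 - real d + 1) ^ t + 1/2 * (-1) ^ t * (real d - 2) ^ t * (real d - 1) * real d
        - 1/2 * (-1) ^ t * real d ^ (t + 1) * (real d + 1)"
    using closed_forms[of d t] by blast+
  have lt: "l - t = k + 1" using lk by simp
  have "(real d + 1) * ((real d ^ 2 - real d + 1) ^ t * real d ^ (l - t)
           + 1/2 * (-1) ^ (l + 1) * (real d - 2) ^ t * (real d - 1) * real d
           + 1/2 * (-1) ^ l * real d ^ (t + 1) * (real d + 1))
       = (real d ^ k - (-1) ^ k) * LadN d t + (real d + 1) * (-1) ^ k * Ucnt d t"
    unfolding L U lt lk by (simp add: power_add field_simps)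
  then have "(real d + 1) * real (card (verts (iter_line_digraph t (CK d l))))
     = (real d + 1) * ((real d ^ 2 - real d + 1) ^ t * real d ^ (l - t)
           + 1/2 * (-1) ^ (l + 1) * (real d - 2) ^ t * (real d - 1) * real d
           + 1/2 * (-1) ^ l * real d ^ (t + 1) * (real d + 1))"
    using E by simp
  then show ?thesis by simp
qed

end
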